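(* Let $m_1 \ge 0$ and let $\mathbf m=[m_2,m_3,\ldots]$ be a sequence of nonnegative integers with finitely many nonzero entries. Put $E = m_1 + 1 + 2m_2 + 3m_3 + 4m_4 + \cdots$ and $V = 2 + m_2 + 2m_3 + 3m_4 + \cdots$. Then the number $R_{m_1;\mathbf m}$ of tubdigons of type $[m_1;\mathbf m]$ equals $$R_{m_1;\mathbf m} = \frac{(E-1)!}{(V-1)!\; m_1!\; m_2!\, m_3! \cdots}.$$
   Context: Tubdigons are the formal expressions generated as follows: the null tubdigon $|$ is a tubdigon, and for every integer $k\ge 1$ and tubdigons $s_1,\ldots,s_k$, the expression $\nabla_k(s_1,\ldots,s_k)$ is a tubdigon (two tubdigons are equal iff they are identical expressions). Geometrically, $\nabla_k(s_1,\ldots,s_k)$ is a roofed $(k+1)$-gon (a 2-gon when $k=1$) with $s_1,\ldots,s_k$ glued along their roofs to its non-roof sides in counterclockwise order; so tubdigons are roofed convex polygons subdivided by non-crossing diagonals into polygons, where 2-gons (doubled edges) are also allowed. The type of a tubdigon is $[m_1;m_2,m_3,\ldots]$ where $m_k$ is the number of occurrences of $\nabla_k$ (the number of $(k+1)$-gon faces). Such a tubdigon has $E$ edges and $V$ vertices as defined in the claim. *)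

theory Defs
  imports Complex_Main
begin

text \<open>Formal expressions: Null is the null tubdigon, Nabla [s1,...,sk] is nabla_k(s1,...,sk).\<close>
datatype tub = Null | Nabla "tub list"

fun is_tubdigon :: "tub \<Rightarrow> bool" where
  "is_tubdigon Null = True"
| "is_tubdigon (Nabla ts) = (ts \<noteq> [] \<and> (\<forall>t\<in>set ts. is_tubdigon t))"

fun occ :: "tub \<Rightarrow> nat \<Rightarrow> nat" where
  "occ Null k = 0"
| "occ (Nabla ts) k = (if length ts = k then 1 else 0) + sum_list (map (\<lambda>t. occ t k) ts)"

text \<open>Tubdigons of type [m 1; m 2, m 3, ...] (the value m 0 is irrelevant).\<close>
definition tubdigons_of_type :: "(nat \<Rightarrow> nat) \<Rightarrow> tub set" where
  "tubdigons_of_type m = {t. is_tubdigon t \<and> (\<forall>k\<ge>1. occ t k = m k)}"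

end

theory Submission
  imports Defs "HOL-Library.Multiset"
begin

fun degs :: "tub \<Rightarrow> nat multiset" where
  "degs Null = {#}"
| "degs (Nabla ts) = add_mset (length ts) (sum_list (map degs ts))"

definition forests :: "nat \<Rightarrow> nat multiset \<Rightarrow> tub list set" where
  "forests r M = {ts. length ts = r \<and> (\<forall>t\<in>set ts. is_tubdigon t) \<and> sum_list (map degs ts) = M}"

definition PF :: "nat multiset \<Rightarrow> nat" where
  "PF M = (\<Prod>k\<in>set_mset M. fact (count M k))"

lemma count_sum_list_map: "count (sum_list (map f ts)) k = sum_list (map (\<lambda>t. count (f t) k) ts)"
  by (induction ts) auto

lemma occ_degs: "occ t k = count (degs t) k"
proof (induction t)
  case Null then show ?case by simp
next
  case (Nabla ts)
  have "sum_list (map (\<lambda>t. occ t k) ts) = sum_list (map (\<lambda>t. count (degs t) k) ts)"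
    using Nabla by (intro arg_cong[where f=sum_list] map_cong) auto
  then show ?case by (simp add: count_sum_list_map)
qed

lemma degs_pos: "is_tubdigon t \<Longrightarrow> 0 \<notin># degs t"
proof (induction t)
  case Null then show ?case by simp
next
  case (Nabla ts)
  then show ?case by auto
qed

lemma forests_0: "forests 0 M = (if M = {#} then {[]} else {})"
  by (auto simp: forests_def)

lemma forests_Suc:
  assumes "0 \<notin># M"
  shows "forests (Suc r) M = Cons Null ` forests r M \<union>
     (\<Union>k\<in>set_mset M. (\<lambda>ts. Nabla (take k ts) # drop k ts) ` forests (r+k) (M - {#k#}))"
    (is "?L = ?A \<union> ?B")
proof
  show "?L \<subseteq> ?A \<union> ?B"
  proof
    fix xs assume xs: "xs \<in> ?L"
    then obtain t rest where xs_eq: "xs = t # rest" by (cases xs) (auto simp: forests_def)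
    show "xs \<in> ?A \<union> ?B"
    proof (cases t)
      case Null
      then show ?thesis using xs xs_eq by (auto simp: forests_def)
    next
      case (Nabla us)
      let ?k = "length us"
      have M: "M = add_mset ?k (sum_list (map degs us) + sum_list (map degs rest))"
        using xs xs_eq Nabla by (auto simp: forests_def)
      have "us @ rest \<in> forests (r + ?k) (M - {#?k#})"
        using xs xs_eq Nabla M by (auto simp: forests_def)
      moreover have "xs = Nabla (take ?k (us @ rest)) # drop ?k (us @ rest)"
        using xs_eq Nabla by simp
      moreover have "?k \<in># M" using M by simp
      ultimately show ?thesis by blast
    qed
  qed
next
  show "?A \<union> ?B \<subseteq> ?L"
  proof
    fix xs assume "xs \<in> ?A \<union> ?B"
    then show "xs \<in> ?L"
    proof
      assume "xs \<in> ?A" then show ?thesis by (auto simp: forests_def)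
    next
      assume "xs \<in> ?B"
      then obtain k ts where k: "k \<in># M" and ts: "ts \<in> forests (r+k) (M - {#k#})"
        and xs: "xs = Nabla (take k ts) # drop k ts" by blast
      have k1: "k \<ge> 1" using k assms by (cases k) auto
      have len: "length ts = r + k" and tub: "\<forall>t\<in>set ts. is_tubdigon t"
        and sm: "sum_list (map degs ts) = M - {#k#}" using ts by (auto simp: forests_def)
      have "take k ts \<noteq> []" using len k1 by auto
      moreover have "\<forall>t\<in>set (take k ts). is_tubdigon t" "\<forall>t\<in>set (drop k ts). is_tubdigon t"
        using tub by (auto dest: in_set_takeD in_set_dropD)
      moreover have "sum_list (map degs (take k ts)) + sum_list (map degs (drop k ts)) = M - {#k#}"
        using sm by (metis append_take_drop_id map_append sum_list_append)
      ultimately show ?thesis using xs len k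
        by (auto simp: forests_def min_def)
    qed
  qed
qed

lemma sum_count_gen:
  fixes g :: "nat \<Rightarrow> nat"
  assumes "finite A" "set_mset M \<subseteq> A"
  shows "(\<Sum>k\<in>A. g k * count M k) = sum_mset (image_mset g M)"
  using assms(2)
proof (induction M)
  case empty then show ?case by simp
next
  case (add x M)
  have xA: "x \<in> A" using add.prems by simp
  have "(\<Sum>k\<in>A. g k * count (add_mset x M) k) = (\<Sum>k\<in>A. g k * count M k + (if k = x then g k else 0))"
    by (intro sum.cong) auto
  also have "\<dots> = (\<Sum>k\<in>A. g k * count M k) + g x"
    using assms(1) xA by (simp add: sum.distrib)
  finally show ?case using add by simp
qed

lemma PF_gen:
  assumes "finite A" "set_mset M \<subseteq> A"
  shows "PF M = (\<Prod>k\<in>A. fact (count M k))"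
  unfolding PF_def using assms by (intro prod.mono_neutral_left) (auto simp: not_in_iff)

lemma PF_remove:
  assumes "k \<in># M"
  shows "PF M = PF (M - {#k#}) * count M k"
proof -
  let ?A = "set_mset M"
  have fin: "finite ?A" by simp
  have s: "set_mset (M - {#k#}) \<subseteq> ?A" by (meson in_diffD subsetI)
  have "PF (M - {#k#}) = (\<Prod>j\<in>?A. fact (count (M - {#k#}) j))" by (rule PF_gen[OF fin s])
  also have "\<dots> = fact (count (M - {#k#}) k) * (\<Prod>j\<in>?A - {k}. fact (count (M - {#k#}) j))"
    by (rule prod.remove[OF fin assms])
  also have "(\<Prod>j\<in>?A - {k}. fact (count (M - {#k#}) j)) = (\<Prod>j\<in>?A - {k}. fact (count M j))"
    by (intro prod.cong refl) simp
  finally have 1: "PF (M - {#k#}) = fact (count M k - 1) * (\<Prod>j\<in>?A - {k}. fact (count M j))" by simp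
  have 2: "PF M = fact (count M k) * (\<Prod>j\<in>?A - {k}. fact (count M j))"
    unfolding PF_def by (rule prod.remove[OF fin assms])
  have pos: "count M k > 0" using assms by simp
  have 3: "fact (count M k) = count M k * (fact (count M k - 1) :: nat)"
    using fact_reduce[OF pos, where 'a=nat] by simp
  have "PF M = count M k * (fact (count M k - 1) * (\<Prod>j\<in>?A - {k}. fact (count M j)))"
    by (simp only: 2 3 mult.assoc)
  then show ?thesis by (simp only: 1 mult.commute)
qed

lemma size_le_sum: "0 \<notin># M \<Longrightarrow> size M \<le> sum_mset M"
proof (induction M)
  case empty then show ?case by simp
next
  case (add x M)
  then have "x \<ge> 1" "size M \<le> sum_mset M" by (auto simp: Suc_le_eq)
  then show ?case by simp
qed

lemma sum_mset_plus_const: "sum_mset (image_mset (\<lambda>k. r + k) M) = r * size M + sum_mset (M :: nat multiset)"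
  by (induction M) auto

lemma main_count:
  "\<forall>r M. r + sum_mset M = n \<longrightarrow> 0 \<notin># M \<longrightarrow>
     finite (forests r M) \<and> card (forests r M) * fact (r + sum_mset M - size M) * PF M * n = r * fact n"
proof (induction n rule: less_induct)
  case (less n)
  show ?case
  proof (intro allI impI)
    fix r M assume rn: "r + sum_mset M = n" and M0: "0 \<notin># M"
    show "finite (forests r M) \<and> card (forests r M) * fact (r + sum_mset M - size M) * PF M * n = r * fact n"
    proof (cases r)
      case 0
      then show ?thesis using rn by (auto simp: forests_0)
    next
      case (Suc r')
      define s where "s = sum_mset M"
      define z where "z = size M"
      define F where "F = (fact (r' + s) :: nat)"
      define n0 where "n0 = Suc r' + s - z"
      define g where "g = (\<lambda>k ts. Nabla (take k ts) # drop k ts)"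
      define c0 where "c0 = card (forests r' M)"
      define c where "c = (\<lambda>k. card (forests (r'+k) (M - {#k#})))"
      have zs: "z \<le> s" unfolding z_def s_def using size_le_sum[OF M0] .
      have nn: "n = Suc (r' + s)" using rn Suc s_def by simp
      have n0S: "n0 = Suc (r' + s - z)" using zs unfolding n0_def by simp
      have IH0: "finite (forests r' M) \<and> c0 * fact (r' + s - z) * PF M * (r' + s) = r' * F"
        using less.IH[of "r' + s"] nn M0 unfolding c0_def F_def s_def z_def by auto
      have IHk: "finite (forests (r'+k) (M - {#k#})) \<and> c k * fact n0 * PF (M - {#k#}) * (r' + s) = (r' + k) * F"
        if k: "k \<in># M" for k
      proof -
        have Mk: "M = add_mset k (M - {#k#})" using k by simp
        have s_eq: "s = k + sum_mset (M - {#k#})" unfolding s_def by (subst Mk) simp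
        have z_eq: "z = Suc (size (M - {#k#}))" unfolding z_def by (subst Mk) simp
        have M0': "0 \<notin># M - {#k#}" using M0 by (meson in_diffD)
        have le: "size (M - {#k#}) \<le> sum_mset (M - {#k#})" using size_le_sum[OF M0'] .
        have e1: "r' + k + sum_mset (M - {#k#}) = r' + s" using s_eq by simp
        have e2: "r' + k + sum_mset (M - {#k#}) - size (M - {#k#}) = n0"
          unfolding n0_def using s_eq z_eq le by simp
        have lt: "r' + s < n" using nn by simp
        have "finite (forests (r'+k) (M - {#k#})) \<and> card (forests (r'+k) (M - {#k#})) *
           fact (r' + k + sum_mset (M - {#k#}) - size (M - {#k#})) * PF (M - {#k#}) * (r' + s) = (r' + k) * fact (r' + s)"
          using less.IH[OF lt, rule_format, OF e1 M0'] .
        then show ?thesis unfolding e2 c_def F_def .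
      qed
      have fin0: "finite (forests r' M)" using IH0 by simp
      have fink: "\<And>k. k \<in># M \<Longrightarrow> finite (forests (r'+k) (M - {#k#}))" using IHk by simp
      have dec: "forests r M = Cons Null ` forests r' M \<union> (\<Union>k\<in>set_mset M. g k ` forests (r'+k) (M - {#k#}))"
        unfolding Suc g_def by (rule forests_Suc[OF M0])
      have finB: "finite (\<Union>k\<in>set_mset M. g k ` forests (r'+k) (M - {#k#}))"
        using fink by auto
      have fin: "finite (forests r M)" using dec fin0 finB by simp
      have disj1: "Cons Null ` forests r' M \<inter> (\<Union>k\<in>set_mset M. g k ` forests (r'+k) (M - {#k#})) = {}"
        unfolding g_def by auto
      have injk: "inj_on (g k) (forests (r'+k) (M - {#k#}))" for k
      proof
        fix a b assume "a \<in> forests (r'+k) (M - {#k#})" "b \<in> forests (r'+k) (M - {#k#})" "g k a = g k b"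
        then have "take k a = take k b" "drop k a = drop k b" unfolding g_def by auto
        then show "a = b" by (metis append_take_drop_id)
      qed
      have disjk: "g i ` forests (r'+i) (M - {#i#}) \<inter> g j ` forests (r'+j) (M - {#j#}) = {}"
        if "i \<noteq> j" for i j
      proof -
        have "length (take i a) = i" if "a \<in> forests (r'+i) (M - {#i#})" for a
          using that by (auto simp: forests_def)
        moreover have "length (take j b) = j" if "b \<in> forests (r'+j) (M - {#j#})" for b
          using that by (auto simp: forests_def)
        ultimately show ?thesis using \<open>i \<noteq> j\<close> unfolding g_def by fastforce
      qed
      have cardB: "card (\<Union>k\<in>set_mset M. g k ` forests (r'+k) (M - {#k#})) = (\<Sum>k\<in>set_mset M. c k)"
      proof -
        have "card (\<Union>k\<in>set_mset M. g k ` forests (r'+k) (M - {#k#})) =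
              (\<Sum>k\<in>set_mset M. card (g k ` forests (r'+k) (M - {#k#})))"
          by (rule card_UN_disjoint) (use fink disjk in auto)
        also have "\<dots> = (\<Sum>k\<in>set_mset M. c k)"
          unfolding c_def by (intro sum.cong refl card_image injk)
        finally show ?thesis .
      qed
      have cardA: "card (Cons Null ` forests r' M) = c0"
        unfolding c0_def by (rule card_image) (simp add: inj_on_def)
      have card_r: "card (forests r M) = c0 + (\<Sum>k\<in>set_mset M. c k)"
        unfolding dec using card_Un_disjoint[OF _ finB disj1] fin0 cardA cardB by simp
      have a: "c0 * fact n0 * PF M * (r' + s) = n0 * r' * F"
      proof -
        have h: "fact n0 = n0 * (fact (r' + s - z) :: nat)" unfolding n0S by simp
        have "c0 * fact n0 * PF M * (r' + s) = n0 * (c0 * fact (r' + s - z) * PF M * (r' + s))"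
          by (simp only: h mult_ac)
        also have "\<dots> = n0 * (r' * F)" using IH0 by simp
        finally show ?thesis by (simp only: mult_ac)
      qed
      have b: "c k * fact n0 * PF M * (r' + s) = count M k * (r' + k) * F" if k: "k \<in># M" for k
      proof -
        have "c k * fact n0 * PF M * (r' + s) = count M k * (c k * fact n0 * PF (M - {#k#}) * (r' + s))"
          unfolding PF_remove[OF k] by (simp add: algebra_simps)
        then show ?thesis using IHk[OF k] by simp
      qed
      have bsum: "(\<Sum>k\<in>set_mset M. c k) * fact n0 * PF M * (r' + s) = F * (r' * z + s)"
      proof -
        have "(\<Sum>k\<in>set_mset M. c k) * fact n0 * PF M * (r' + s) = (\<Sum>k\<in>set_mset M. c k * fact n0 * PF M * (r' + s))"
          by (simp add: sum_distrib_right)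
        also have "\<dots> = (\<Sum>k\<in>set_mset M. F * ((r' + k) * count M k))"
        proof (intro sum.cong refl)
          fix k assume k: "k \<in> set_mset M"
          show "c k * fact n0 * PF M * (r' + s) = F * ((r' + k) * count M k)"
            using b[OF k] by (simp only: mult_ac)
        qed
        also have "\<dots> = F * (\<Sum>k\<in>set_mset M. (r' + k) * count M k)"
          by (simp add: sum_distrib_left)
        also have "(\<Sum>k\<in>set_mset M. (r' + k) * count M k) = sum_mset (image_mset (\<lambda>k. r' + k) M)"
          by (rule sum_count_gen) auto
        also have "\<dots> = r' * z + s" unfolding z_def s_def by (rule sum_mset_plus_const)
        finally show ?thesis .
      qed
      define X where "X = (c0 + (\<Sum>k\<in>set_mset M. c k)) * fact n0 * PF M"
      have Xeq: "X * (r' + s) = Suc r' * F * (r' + s)"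
      proof -
        have "X * (r' + s) = c0 * fact n0 * PF M * (r' + s) + (\<Sum>k\<in>set_mset M. c k) * fact n0 * PF M * (r' + s)"
          unfolding X_def by (simp add: algebra_simps)
        also have "\<dots> = F * (n0 * r' + r' * z + s)" using a bsum by (simp add: algebra_simps)
        also have "n0 * r' + r' * z + s = Suc r' * (r' + s)"
        proof -
          have "n0 + z = Suc r' + s" unfolding n0_def using zs by simp
          then have "n0 * r' + r' * z = (Suc r' + s) * r'" by (metis add_mult_distrib mult.commute)
          then show ?thesis by (simp add: algebra_simps)
        qed
        finally show ?thesis by (simp add: algebra_simps)
      qed
      have X: "X = Suc r' * F"
      proof (cases "r' + s = 0")
        case True
        then have "r' = 0" "M = {#}" using s_def M0 by (auto simp: multiset_eq_iff) (metis count_inI)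
        then show ?thesis unfolding X_def c0_def F_def n0_def s_def z_def
          by (simp add: forests_0 PF_def)
      next
        case False
        then show ?thesis using Xeq by (metis mult_right_cancel)
      qed
      have "card (forests r M) * fact (r + sum_mset M - size M) * PF M * n = X * n"
        unfolding X_def card_r n0_def s_def z_def using Suc by simp
      also have "\<dots> = Suc r' * (n * F)" unfolding X by (simp add: algebra_simps)
      also have "n * F = fact n" unfolding nn F_def by simp
      finally show ?thesis using fin Suc by simp
    qed
  qed
qed

theorem mainTheorem3:
  fixes m :: "nat \<Rightarrow> nat"
  assumes fin: "finite {k. m k \<noteq> 0}"
  defines "S \<equiv> {k. 1 \<le> k \<and> m k \<noteq> 0}"
  defines "E \<equiv> 1 + (\<Sum>k\<in>S. k * m k)"
  defines "V \<equiv> 2 + (\<Sum>k\<in>S. (k - 1) * m k)"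
  shows "real (card (tubdigons_of_type m)) =
           fact (E - 1) / (fact (V - 1) * (\<Prod>k\<in>S. fact (m k)))"
proof -
  have finS: "finite S" unfolding S_def by (rule finite_subset[OF _ fin]) auto
  define Mm where "Mm = (\<Sum>k\<in>S. replicate_mset (m k) k)"
  have cnt: "count Mm j = (if j \<in> S then m j else 0)" for j
    unfolding Mm_def count_sum using finS by (simp add: sum.delta)
  have setM: "set_mset Mm = S"
  proof (intro set_eqI)
    fix x
    have "x \<in># Mm \<longleftrightarrow> 0 < count Mm x" by simp
    also have "\<dots> \<longleftrightarrow> x \<in> S" unfolding cnt by (simp add: S_def)
    finally show "x \<in># Mm \<longleftrightarrow> x \<in> S" .
  qed
  have M0: "0 \<notin># Mm" using cnt[of 0] by (simp add: S_def count_eq_zero_iff[symmetric])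
  have sumM: "sum_mset Mm = (\<Sum>k\<in>S. k * m k)"
  proof -
    have "(\<Sum>k\<in>S. k * count Mm k) = sum_mset (image_mset id Mm)"
      using sum_count_gen[OF finS, of Mm id] setM by simp
    moreover have "(\<Sum>k\<in>S. k * count Mm k) = (\<Sum>k\<in>S. k * m k)"
      by (intro sum.cong refl) (simp add: cnt)
    ultimately show ?thesis by simp
  qed
  have sizeM: "size Mm = (\<Sum>k\<in>S. m k)" unfolding Mm_def by simp
  have PFM: "PF Mm = (\<Prod>k\<in>S. fact (m k))"
    unfolding PF_def setM by (intro prod.cong refl) (simp add: cnt)
  have T: "tubdigons_of_type m = {t. is_tubdigon t \<and> degs t = Mm}"
  proof (intro set_eqI iffI)
    fix t assume "t \<in> tubdigons_of_type m"
    then have tt: "is_tubdigon t" and oc: "\<forall>k\<ge>1. occ t k = m k" unfolding tubdigons_of_type_def by auto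
    have "count (degs t) k = count Mm k" for k
    proof (cases "k = 0")
      case True
      then show ?thesis using degs_pos[OF tt] M0 by (simp add: not_in_iff)
    next
      case False
      then show ?thesis using oc[rule_format, of k] by (simp add: occ_degs cnt S_def)
    qed
    then show "t \<in> {t. is_tubdigon t \<and> degs t = Mm}" using tt by (simp add: multiset_eq_iff)
  next
    fix t assume "t \<in> {t. is_tubdigon t \<and> degs t = Mm}"
    then show "t \<in> tubdigons_of_type m"
      unfolding tubdigons_of_type_def by (auto simp: occ_degs cnt S_def)
  qed
  have F1: "forests 1 Mm = (\<lambda>t. [t]) ` tubdigons_of_type m"
    unfolding T forests_def by (auto simp: length_Suc_conv)
  have c1: "card (forests 1 Mm) = card (tubdigons_of_type m)"
    unfolding F1 by (rule card_image) (simp add: inj_on_def)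
  have key: "card (forests 1 Mm) * fact (1 + sum_mset Mm - size Mm) * PF Mm * (1 + sum_mset Mm) = 1 * fact (1 + sum_mset Mm)"
    using main_count[rule_format, OF refl M0, of 1] by blast
  have dist: "(\<Sum>k\<in>S. (k - 1) * m k) + (\<Sum>k\<in>S. m k) = (\<Sum>k\<in>S. k * m k)"
  proof -
    have "(\<Sum>k\<in>S. (k - 1) * m k) + (\<Sum>k\<in>S. m k) = (\<Sum>k\<in>S. (k - 1) * m k + m k)"
      by (simp add: sum.distrib)
    also have "\<dots> = (\<Sum>k\<in>S. k * m k)"
    proof (intro sum.cong refl)
      fix k assume "k \<in> S"
      then have "k \<ge> 1" by (simp add: S_def)
      then show "(k - 1) * m k + m k = k * m k" by (cases k) auto
    qed
    finally show ?thesis .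
  qed
  have n0: "1 + sum_mset Mm - size Mm = V - 1" unfolding V_def sumM sizeM using dist by linarith
  have En: "1 + sum_mset Mm = E" unfolding E_def sumM ..
  have key2: "card (tubdigons_of_type m) * fact (V - 1) * (\<Prod>k\<in>S. fact (m k)) * E = fact E"
    using key unfolding c1 PFM unfolding n0 unfolding En by simp
  have Es: "E = Suc (E - 1)" unfolding E_def by simp
  have "fact E = E * (fact (E - 1) :: nat)" using fact_Suc[of "E - 1", where 'a=nat] Es by simp
  then have key3: "card (tubdigons_of_type m) * fact (V - 1) * (\<Prod>k\<in>S. fact (m k)) = (fact (E - 1) :: nat)"
    using key2 Es by (metis mult.commute mult_left_cancel zero_less_Suc less_irrefl_nat)
  have pos: "(fact (V - 1) * (\<Prod>k\<in>S. fact (m k)) :: real) \<noteq> 0" using finS by (simp add: prod_zero_iff)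
  have "real (fact (E - 1)) = real (card (tubdigons_of_type m)) * (fact (V - 1) * (\<Prod>k\<in>S. fact (m k)))"
    unfolding key3[symmetric] by (simp add: of_nat_fact of_nat_prod mult_ac)
  then show ?thesis using pos by (simp add: of_nat_fact field_simps)
qed

end
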